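(* Let $C=\{\beta=(\beta_1,\beta_2)\in[0,1]^2:\beta_1\le\beta_2\}$ and let $A\subseteq C$ satisfy: (i) $A$ is closed; (ii) $\{(b,b): b\in[0,1]\}\subseteq A$; (iii) for all $\beta\in A$ and all $\gamma\in C$, if $\beta_1\le\gamma_1\le\gamma_2\le\beta_2$ then $\gamma\in A$. Then there exists a function $\Delta:[0,1]\to[0,1]$ such that for all $\beta\in C$: $\beta\in A$ if and only if $\beta_2-\beta_1\le\Delta\big(\tfrac{\beta_1+\beta_2}{2}\big)$. *)

theory Defs
  imports "HOL-Analysis.Analysis"
begin

definition Cset :: "(real \<times> real) set" where
  "Cset = {(b1, b2). 0 \<le> b1 \<and> b1 \<le> b2 \<and> b2 \<le> 1}"

end

theory Submission
  imports Defs
begin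

theorem lemma1:
  fixes A :: "(real \<times> real) set"
  assumes "A \<subseteq> Cset"
    and "closed A"
    and "\<forall>b\<in>{0..1}. (b, b) \<in> A"
    and "\<forall>\<beta>\<in>A. \<forall>\<gamma>\<in>Cset. fst \<beta> \<le> fst \<gamma> \<and> fst \<gamma> \<le> snd \<gamma> \<and> snd \<gamma> \<le> snd \<beta> \<longrightarrow> \<gamma> \<in> A"
  shows "\<exists>\<Delta> :: real \<Rightarrow> real. (\<forall>x\<in>{0..1}. \<Delta> x \<in> {0..1}) \<and>
           (\<forall>\<beta>\<in>Cset. \<beta> \<in> A \<longleftrightarrow> snd \<beta> - fst \<beta> \<le> \<Delta> ((fst \<beta> + snd \<beta>) / 2))"
proof -
  define S where "S m = (\<lambda>w::real. (m - w/2, m + w/2)) -` A" for m :: real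
  have cl: "closed (S m)" for m
    unfolding S_def
    by (intro closed_vimage assms(2)) (intro continuous_intros, auto)
  have bd: "w \<le> 1" "0 \<le> w" if "w \<in> S m" for w m
    using that assms(1) unfolding S_def Cset_def by auto
  have bdd: "bdd_above (S m)" for m using bd(1) by (intro bdd_aboveI[of _ 1]) blast
  have ne: "0 \<in> S m" if "m \<in> {0..1}" for m
    using assms(3) that unfolding S_def by auto
  have supin: "Sup (S m) \<in> S m" if "m \<in> {0..1}" for m
    using closed_contains_Sup[OF _ bdd cl] ne[OF that] by blast
  show ?thesis
  proof (intro exI[of _ "\<lambda>m. Sup (S m)"] conjI ballI)
    fix x :: real assume x: "x \<in> {0..1}"
    show "Sup (S x) \<in> {0..1}" using supin[OF x] bd by auto
  next
    fix \<beta> assume b: "\<beta> \<in> Cset"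
    obtain b1 b2 where be: "\<beta> = (b1, b2)" by force
    define m where "m = (b1 + b2) / 2"
    define w where "w = b2 - b1"
    have eq: "\<beta> = (m - w/2, m + w/2)" using be unfolding m_def w_def by (auto simp: field_simps)
    have m01: "m \<in> {0..1}" using b be unfolding Cset_def m_def by auto
    show "\<beta> \<in> A \<longleftrightarrow> snd \<beta> - fst \<beta> \<le> Sup (S ((fst \<beta> + snd \<beta>) / 2))"
    proof
      assume "\<beta> \<in> A"
      then have "w \<in> S m" using eq unfolding S_def by auto
      then have "w \<le> Sup (S m)" by (rule cSup_upper[OF _ bdd])
      then show "snd \<beta> - fst \<beta> \<le> Sup (S ((fst \<beta> + snd \<beta>) / 2))"
        using be m_def w_def by simp
    next
      assume "snd \<beta> - fst \<beta> \<le> Sup (S ((fst \<beta> + snd \<beta>) / 2))"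
      then have le: "w \<le> Sup (S m)" using be unfolding m_def w_def by simp
      have "(m - Sup (S m)/2, m + Sup (S m)/2) \<in> A" using supin[OF m01] unfolding S_def by auto
      moreover have "fst \<beta> \<le> snd \<beta>" using b be unfolding Cset_def by auto
      ultimately show "\<beta> \<in> A"
        using assms(4) b le eq by (metis (no_types, lifting) fst_conv snd_conv
          diff_mono add_left_mono divide_right_mono order_refl zero_le_numeral)
    qed
  qed
qed

end
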